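(* Let $h:\mathcal{X}\to\mathcal{Y}$ be such that for every $\lambda\ge0$ the function $(x,x')\mapsto d_{\mathcal{Y}}(h(x),h(x'))-\lambda d_{\mathcal{X}}(x,x')$ is continuous on $\mathcal{X}\times\mathcal{X}$. Then \[ R(h)=\inf_{\lambda\ge0}\Big\{\lambda\epsilon+\mathbf{E}_{P_X}\big[r_\lambda(h,X)\big]\Big\},\qquad r_\lambda(h,x)=\sup_{x'\in\mathcal{X}}\big\{d_{\mathcal{Y}}(h(x),h(x'))-\lambda d_{\mathcal{X}}(x,x')\big\}. \]
   Context: $(\mathcal{X},d_{\mathcal{X}})$ and $(\mathcal{Y},d_{\mathcal{Y}})$ are complete separable metric spaces; $P_X$ is a Borel probability distribution on $\mathcal{X}$ and $\epsilon>0$. The fair regularizer is \[ R(h)=\sup\Big\{\mathbf{E}_\Pi[d_{\mathcal{Y}}(h(X),h(X'))]\;:\;\Pi\in\Delta(\mathcal{X}\times\mathcal{X}),\ \mathbf{E}_\Pi[d_{\mathcal{X}}(X,X')]\le\epsilon,\ \Pi(\cdot,\mathcal{X})=P_X\Big\}, \] where $\Delta(\mathcal{X}\times\mathcal{X})$ is the set of Borel probability measures on $\mathcal{X}\times\mathcal{X}$, $(X,X')\sim\Pi$, and $\Pi(\cdot,\mathcal{X})$ denotes the first marginal of $\Pi$. *)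

theory Defs
  imports "HOL-Probability.Probability"
begin

text \<open>Expectations of nonnegative quantities are nonnegative Lebesgue integrals (values in ennreal),
  so R(h) may be infinite.\<close>
definition fair_reg :: "'a::polish_space measure \<Rightarrow> real \<Rightarrow> ('a \<Rightarrow> 'b::polish_space) \<Rightarrow> ennreal" where
  "fair_reg P eps h = (SUP Pi \<in> {Pi :: ('a \<times> 'a) measure.
        prob_space Pi \<and> sets Pi = sets (borel :: ('a \<times> 'a) measure) \<and>
        (\<integral>\<^sup>+ p. ennreal (dist (fst p) (snd p)) \<partial>Pi) \<le> ennreal eps \<and>
        distr Pi borel fst = P}.
      \<integral>\<^sup>+ p. ennreal (dist (h (fst p)) (h (snd p))) \<partial>Pi)"

text \<open>r_lambda(h,x) = sup over x' of d(h x, h x') - lambda d(x,x'); this is always \<ge> 0 (take x' = x).\<close>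
definition r_lam :: "real \<Rightarrow> ('a::metric_space \<Rightarrow> 'b::metric_space) \<Rightarrow> 'a \<Rightarrow> ereal" where
  "r_lam lam h x = (SUP x' \<in> UNIV. ereal (dist (h x) (h x') - lam * dist x x'))"

end

theory Submission
  imports Defs
begin


definition cpl :: "'a::polish_space measure \<Rightarrow> ('a \<times> 'a) measure set" where
  "cpl P = {Q. prob_space Q \<and> sets Q = sets (borel :: ('a \<times> 'a) measure) \<and> distr Q borel fst = P}"

definition cost :: "('a::metric_space \<times> 'a) measure \<Rightarrow> ennreal" where
  "cost Q = (\<integral>\<^sup>+ p. ennreal (dist (fst p) (snd p)) \<partial>Q)"

definition val :: "('a \<Rightarrow> 'b::metric_space) \<Rightarrow> ('a \<times> 'a) measure \<Rightarrow> ennreal" where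
  "val h Q = (\<integral>\<^sup>+ p. ennreal (dist (h (fst p)) (h (snd p))) \<partial>Q)"

lemma fair_reg_alt: "fair_reg P eps h = (SUP Q \<in> {Q \<in> cpl P. cost Q \<le> ennreal eps}. val h Q)"
  unfolding fair_reg_def cpl_def cost_def val_def
  by (rule SUP_cong) auto

lemma meas_pair_borel:
  fixes f g :: "'c \<Rightarrow> 'a::polish_space"
  assumes "f \<in> borel_measurable M" "g \<in> borel_measurable M"
  shows "(\<lambda>x. (f x, g x)) \<in> borel_measurable M"
proof -
  have "(\<lambda>x. (f x, g x)) \<in> measurable M (borel \<Otimes>\<^sub>M borel)" using assms by (intro measurable_Pair)
  then show ?thesis by (simp add: borel_prod)
qed

lemma cost_meas: "(\<lambda>p. ennreal (dist (fst p) (snd p))) \<in> borel_measurable (borel :: ('a::polish_space \<times> 'a) measure)"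
proof -
  have "(\<lambda>p::'a\<times>'a. dist (fst p) (snd p)) \<in> borel_measurable borel"
    by (intro borel_measurable_continuous_onI continuous_intros)
  then show ?thesis by measurable
qed

lemma mix_cpl:
  fixes P :: "'a::polish_space measure"
  assumes P1: "Q1 \<in> cpl P" and P2: "Q2 \<in> cpl P" and q: "0 \<le> q" "q \<le> 1"
  shows "\<exists>Q \<in> cpl P. \<forall>g \<in> borel_measurable borel.
           (\<integral>\<^sup>+ p. g p \<partial>Q) = ennreal q * (\<integral>\<^sup>+ p. g p \<partial>Q2) + ennreal (1 - q) * (\<integral>\<^sup>+ p. g p \<partial>Q1)"
proof -
  define B where "B = measure_pmf (bernoulli_pmf q)"
  define K where "K = (\<lambda>b. if b then Q2 else Q1)"
  define Q where "Q = B \<bind> K"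
  have K: "K \<in> measurable B (subprob_algebra borel)"
    using P1 P2 unfolding B_def measurable_pmf_measure1 K_def cpl_def
    by (auto simp: space_subprob_algebra prob_space_imp_subprob_space)
  have Kb: "prob_space (K b)" "sets (K b) = sets borel" "distr (K b) borel fst = P" for b
    using P1 P2 unfolding K_def cpl_def by auto
  have Bne: "space B \<noteq> {}" unfolding B_def by simp
  have sP: "sets Q = sets borel" unfolding Q_def using Kb Bne by (intro sets_bind) auto
  have int: "(\<integral>\<^sup>+ p. g p \<partial>Q) = ennreal q * (\<integral>\<^sup>+ p. g p \<partial>Q2) + ennreal (1 - q) * (\<integral>\<^sup>+ p. g p \<partial>Q1)"
    if g: "g \<in> borel_measurable borel" for g
  proof -
    have "(\<integral>\<^sup>+ p. g p \<partial>Q) = (\<integral>\<^sup>+ b. \<integral>\<^sup>+ p. g p \<partial>K b \<partial>B)"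
      unfolding Q_def by (rule nn_integral_bind[OF g K])
    also have "\<dots> = ennreal q * (\<integral>\<^sup>+ p. g p \<partial>Q2) + ennreal (1 - q) * (\<integral>\<^sup>+ p. g p \<partial>Q1)"
      unfolding B_def using q by (simp add: K_def mult.commute)
    finally show ?thesis .
  qed
  have "emeasure Q (space Q) = 1"
  proof -
    have "space Q = UNIV" using sP by (metis sets_eq_imp_space_eq space_borel)
    then have "emeasure Q (space Q) = (\<integral>\<^sup>+ p. 1 \<partial>Q)" by simp
    also have "\<dots> = ennreal q * 1 + ennreal (1 - q) * 1"
      using int[of "\<lambda>_. 1"] Kb[of True] Kb[of False] by (simp add: prob_space.emeasure_space_1 K_def)
    also have "\<dots> = 1" using q by (simp flip: ennreal_plus)
    finally show ?thesis .
  qed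
  then have pP: "prob_space Q" by (rule prob_spaceI)
  have "distr Q borel fst = B \<bind> (\<lambda>b. distr (K b) borel fst)"
    unfolding Q_def by (rule distr_bind[OF K Bne]) (intro borel_measurable_continuous_onI continuous_intros)
  also have "\<dots> = B \<bind> (\<lambda>b. P)" using Kb by simp
  also have "\<dots> = P"
  proof -
    have fm: "fst \<in> measurable (K True) borel"
      unfolding measurable_cong_sets[OF Kb(2)[of True] refl]
      by (intro borel_measurable_continuous_onI continuous_intros)
    have "prob_space P" using prob_space.prob_space_distr[OF Kb(1)[of True] fm] Kb(3)[of True] by simp
    then show ?thesis unfolding B_def
      by (intro bind_const') (auto intro: prob_space_imp_subprob_space prob_space_measure_pmf)
  qed
  finally have "distr Q borel fst = P" .
  then have "Q \<in> cpl P" using pP sP unfolding cpl_def by auto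
  with int show ?thesis by blast
qed



locale fr_setup =
  fixes P :: "'a::polish_space measure" and h :: "'a \<Rightarrow> 'b::polish_space" and eps :: real
  assumes prob: "prob_space P" and setsP: "sets P = sets (borel :: 'a measure)"
    and eps: "eps > 0"
    and cont: "\<forall>lam \<ge> 0. continuous_on UNIV (\<lambda>(x, x'). dist (h x) (h x') - lam * dist x x')"
begin

definition gg :: "real \<Rightarrow> 'a \<Rightarrow> 'a \<Rightarrow> real" where
  "gg lam x y = dist (h x) (h y) - lam * dist x y"

lemma gg_cont: "lam \<ge> 0 \<Longrightarrow> continuous_on UNIV (\<lambda>p. gg lam (fst p) (snd p))"
  using cont unfolding gg_def by (auto simp: case_prod_beta')

lemma gg_cont2: "lam \<ge> 0 \<Longrightarrow> continuous_on UNIV (gg lam x)"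
proof -
  assume l: "lam \<ge> 0"
  have "continuous_on UNIV ((\<lambda>p. gg lam (fst p) (snd p)) \<circ> (\<lambda>y. (x, y)))"
    by (rule continuous_on_compose[OF _ continuous_on_subset[OF gg_cont[OF l]]]) (auto intro: continuous_intros)
  then show ?thesis by (simp add: o_def)
qed

lemma gg_cont1: "lam \<ge> 0 \<Longrightarrow> continuous_on UNIV (\<lambda>x. gg lam x y)"
proof -
  assume l: "lam \<ge> 0"
  have "continuous_on UNIV ((\<lambda>p. gg lam (fst p) (snd p)) \<circ> (\<lambda>x. (x, y)))"
    by (rule continuous_on_compose[OF _ continuous_on_subset[OF gg_cont[OF l]]]) (auto intro: continuous_intros)
  then show ?thesis by (simp add: o_def)
qed

lemma h_cont: "continuous_on UNIV (\<lambda>p. dist (h (fst p)) (h (snd p)))"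
  using gg_cont[of 0] unfolding gg_def by simp

lemma val_meas: "(\<lambda>p. ennreal (dist (h (fst p)) (h (snd p)))) \<in> borel_measurable borel"
proof -
  have "(\<lambda>p. dist (h (fst p)) (h (snd p))) \<in> borel_measurable borel"
    by (rule borel_measurable_continuous_onI[OF h_cont])
  then show ?thesis by measurable
qed

definition D :: "'a set" where
  "D = (SOME D. countable D \<and> (\<forall>X. open X \<longrightarrow> X \<noteq> {} \<longrightarrow> (\<exists>d \<in> D. d \<in> X)))"

lemma D: "countable D" "\<And>X. open X \<Longrightarrow> X \<noteq> {} \<Longrightarrow> \<exists>d \<in> D. d \<in> X"
proof -
  have "\<exists>D::'a set. countable D \<and> (\<forall>X. open X \<longrightarrow> X \<noteq> {} \<longrightarrow> (\<exists>d \<in> D. d \<in> X))"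
    by (rule countable_dense_exists)
  then have "countable D \<and> (\<forall>X. open X \<longrightarrow> X \<noteq> {} \<longrightarrow> (\<exists>d \<in> D. d \<in> X))"
    unfolding D_def by (rule someI_ex)
  then show "countable D" "\<And>X. open X \<Longrightarrow> X \<noteq> {} \<Longrightarrow> \<exists>d \<in> D. d \<in> X" by auto
qed

lemma D_ne: "D \<noteq> {}" using D(2)[of UNIV] by auto

lemma r_lam_D: "lam \<ge> 0 \<Longrightarrow> r_lam lam h x = (SUP y \<in> D. ereal (gg lam x y))"
proof -
  assume l: "lam \<ge> 0"
  show ?thesis unfolding r_lam_def gg_def[symmetric]
  proof (rule antisym)
    show "(SUP y \<in> D. ereal (gg lam x y)) \<le> (SUP y. ereal (gg lam x y))"
      by (rule SUP_subset_mono) auto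
    show "(SUP y. ereal (gg lam x y)) \<le> (SUP y \<in> D. ereal (gg lam x y))"
    proof (rule SUP_least)
      fix y
      show "ereal (gg lam x y) \<le> (SUP y \<in> D. ereal (gg lam x y))"
      proof (rule ereal_le_epsilon2)
        fix e :: real assume e: "0 < e"
        have "open {z. gg lam x y - e < gg lam x z}"
          by (rule open_Collect_less) (auto intro: continuous_intros gg_cont2[OF l])
        moreover have "y \<in> {z. gg lam x y - e < gg lam x z}" using e by simp
        ultimately obtain d where d: "d \<in> D" "gg lam x y - e < gg lam x d" using D(2) by blast
        have "ereal (gg lam x y) \<le> ereal (gg lam x d) + ereal e" using d by simp
        also have "\<dots> \<le> (SUP y \<in> D. ereal (gg lam x y)) + ereal e"
          using d by (intro add_right_mono SUP_upper) auto
        finally show "ereal (gg lam x y) \<le> (SUP y \<in> D. ereal (gg lam x y)) + ereal e" .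
      qed
    qed
  qed
qed

lemma r_ge: "ereal (gg lam x y) \<le> r_lam lam h x"
  unfolding r_lam_def gg_def by (rule SUP_upper) auto

lemma r_nonneg: "0 \<le> r_lam lam h x"
  using r_ge[of lam x x] by (simp add: gg_def zero_ereal_def)

lemma r_meas: "lam \<ge> 0 \<Longrightarrow> (\<lambda>x. r_lam lam h x) \<in> borel_measurable borel"
proof -
  assume l: "lam \<ge> 0"
  have "(\<lambda>x. SUP y \<in> D. ereal (gg lam x y)) \<in> borel_measurable borel"
  proof (rule borel_measurable_SUP[OF D(1)])
    fix y
    have "(\<lambda>x. gg lam x y) \<in> borel_measurable borel"
      by (rule borel_measurable_continuous_onI[OF gg_cont1[OF l]])
    then show "(\<lambda>x. ereal (gg lam x y)) \<in> borel_measurable borel" by measurable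
  qed
  then show ?thesis using r_lam_D[OF l] by simp
qed

lemma re_meas: "lam \<ge> 0 \<Longrightarrow> (\<lambda>x. e2ennreal (r_lam lam h x)) \<in> borel_measurable borel"
  using measurable_compose[OF r_meas measurable_e2ennreal] by (simp add: o_def)

lemma pointwise_weak: assumes l: "lam \<ge> 0" shows
  "ennreal (dist (h a) (h b)) \<le> ennreal (lam * dist a b) + e2ennreal (r_lam lam h a)"
proof (cases "r_lam lam h a")
  case (real t)
  have "gg lam a b \<le> t" using r_ge[of lam a b] real by simp
  moreover have "t \<ge> 0" using r_nonneg[of lam a] real by simp
  ultimately have "ennreal (dist (h a) (h b)) \<le> ennreal (lam * dist a b + t)"
    unfolding gg_def by (intro ennreal_leI) simp
  also have "\<dots> = ennreal (lam * dist a b) + ennreal t"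
    using l \<open>t \<ge> 0\<close> by (simp add: ennreal_plus)
  finally show ?thesis using real by (simp add: e2ennreal_ereal)
next
  case PInf
  then show ?thesis by simp
next
  case MInf
  then show ?thesis using r_nonneg[of lam a] by simp
qed


lemma measP: "measurable P N = measurable borel N"
  by (rule measurable_cong_sets[OF setsP refl])

lemma cpl_meas: "Q \<in> cpl P \<Longrightarrow> measurable Q N = measurable borel N"
  unfolding cpl_def by (intro measurable_cong_sets) auto

lemma push:
  fixes T :: "'a \<Rightarrow> 'a"
  assumes T: "T \<in> borel_measurable borel"
  shows "distr P borel (\<lambda>x. (x, T x)) \<in> cpl P"
    "cost (distr P borel (\<lambda>x. (x, T x))) = (\<integral>\<^sup>+ x. ennreal (dist x (T x)) \<partial>P)"
    "val h (distr P borel (\<lambda>x. (x, T x))) = (\<integral>\<^sup>+ x. ennreal (dist (h x) (h (T x))) \<partial>P)"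
proof -
  have m: "(\<lambda>x. (x, T x)) \<in> measurable P borel"
    unfolding measP by (rule meas_pair_borel[OF measurable_ident_sets[OF refl] T])
  have fm: "fst \<in> measurable (borel :: ('a \<times> 'a) measure) borel"
    by (intro borel_measurable_continuous_onI continuous_intros)
  have "distr (distr P borel (\<lambda>x. (x, T x))) borel fst = distr P borel (fst \<circ> (\<lambda>x. (x, T x)))"
    by (rule distr_distr[OF fm m])
  also have "\<dots> = distr P borel (\<lambda>x. x)" by (simp add: o_def)
  also have "\<dots> = P" by (rule distr_id2) (simp add: setsP)
  finally show "distr P borel (\<lambda>x. (x, T x)) \<in> cpl P"
    unfolding cpl_def using prob_space.prob_space_distr[OF prob m] by simp
  show "cost (distr P borel (\<lambda>x. (x, T x))) = (\<integral>\<^sup>+ x. ennreal (dist x (T x)) \<partial>P)"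
    unfolding cost_def by (subst nn_integral_distr[OF m]) (auto simp: cost_meas)
  show "val h (distr P borel (\<lambda>x. (x, T x))) = (\<integral>\<^sup>+ x. ennreal (dist (h x) (h (T x))) \<partial>P)"
    unfolding val_def by (subst nn_integral_distr[OF m]) (auto simp: val_meas)
qed

lemma Q0: "distr P borel (\<lambda>x. (x, x)) \<in> cpl P" "cost (distr P borel (\<lambda>x. (x, x))) = 0"
  "val h (distr P borel (\<lambda>x. (x, x))) = 0"
  using push[of "\<lambda>x. x"] by auto

lemma weak:
  assumes Q: "Q \<in> cpl P" and c: "cost Q \<le> ennreal eps" and l: "lam \<ge> 0"
  shows "val h Q \<le> ennreal (lam * eps) + (\<integral>\<^sup>+ x. e2ennreal (r_lam lam h x) \<partial>P)"
proof -
  have rm: "(\<lambda>p. e2ennreal (r_lam lam h (fst p))) \<in> borel_measurable Q"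
    unfolding cpl_meas[OF Q]
    by (rule measurable_compose[OF _ re_meas[OF l]]) (intro borel_measurable_continuous_onI continuous_intros)
  have cm: "(\<lambda>p. ennreal (dist (fst p) (snd p))) \<in> borel_measurable Q"
    unfolding cpl_meas[OF Q] by (rule cost_meas)
  have "val h Q \<le> (\<integral>\<^sup>+ p. ennreal lam * ennreal (dist (fst p) (snd p)) + e2ennreal (r_lam lam h (fst p)) \<partial>Q)"
    unfolding val_def using pointwise_weak[OF l] l by (intro nn_integral_mono) (simp add: ennreal_mult')
  also have "\<dots> = ennreal lam * cost Q + (\<integral>\<^sup>+ p. e2ennreal (r_lam lam h (fst p)) \<partial>Q)"
    unfolding cost_def using cm rm by (simp add: nn_integral_add nn_integral_cmult)
  also have "(\<integral>\<^sup>+ p. e2ennreal (r_lam lam h (fst p)) \<partial>Q) = (\<integral>\<^sup>+ x. e2ennreal (r_lam lam h x) \<partial>distr Q borel fst)"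
    by (rule nn_integral_distr[symmetric])
       (auto simp: cpl_meas[OF Q] re_meas[OF l] borel_measurable_continuous_onI continuous_intros)
  also have "distr Q borel fst = P" using Q unfolding cpl_def by auto
  also have "ennreal lam * cost Q \<le> ennreal (lam * eps)"
    using c l by (metis ennreal_mult' mult_left_mono zero_le)
  finally show ?thesis by (simp add: add_right_mono)
qed

lemma weak_dual:
  "fair_reg P eps h \<le> (INF lam \<in> {0..}. ennreal (lam * eps) + (\<integral>\<^sup>+ x. e2ennreal (r_lam lam h x) \<partial>P))"
  unfolding fair_reg_alt by (intro INF_greatest SUP_least weak) auto

end


locale fr_fin = fr_setup +
  assumes fin: "fair_reg P eps h < \<top>"
begin

definition V :: real where "V = enn2real (fair_reg P eps h)"

lemma V: "fair_reg P eps h = ennreal V" "V \<ge> 0"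
  using fin unfolding V_def by (auto simp: less_top)

lemma feas_le: "Q \<in> cpl P \<Longrightarrow> cost Q \<le> ennreal eps \<Longrightarrow> val h Q \<le> ennreal V"
  unfolding V(1)[symmetric] fair_reg_alt by (rule SUP_upper) auto

lemma mix_le:
  assumes Q1: "Q1 \<in> cpl P" and Q2: "Q2 \<in> cpl P" and q: "0 \<le> q" "q \<le> 1"
    and c: "ennreal q * cost Q2 + ennreal (1 - q) * cost Q1 \<le> ennreal eps"
  shows "ennreal q * val h Q2 + ennreal (1 - q) * val h Q1 \<le> ennreal V"
proof -
  obtain M where M: "M \<in> cpl P" and int: "\<And>g. g \<in> borel_measurable borel \<Longrightarrow>
      (\<integral>\<^sup>+ p. g p \<partial>M) = ennreal q * (\<integral>\<^sup>+ p. g p \<partial>Q2) + ennreal (1 - q) * (\<integral>\<^sup>+ p. g p \<partial>Q1)"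
    using mix_cpl[OF Q1 Q2 q] by blast
  have "cost M = ennreal q * cost Q2 + ennreal (1 - q) * cost Q1"
    unfolding cost_def by (rule int[OF cost_meas])
  moreover have "val h M = ennreal q * val h Q2 + ennreal (1 - q) * val h Q1"
    unfolding val_def by (rule int[OF val_meas])
  ultimately show ?thesis using feas_le[OF M] c by simp
qed

lemma finite_bound:
  assumes Q: "Q \<in> cpl P" and b: "cost Q = ennreal b" "b \<ge> 0"
  shows "val h Q \<le> ennreal (V * max 1 (b / eps))"
proof (cases "b \<le> eps")
  case True
  then have "val h Q \<le> ennreal V" using feas_le[OF Q] b by simp
  also have "\<dots> \<le> ennreal (V * max 1 (b / eps))" using V(2)
    by (intro ennreal_leI) (metis max.cobounded1 mult.right_neutral mult_left_mono)
  finally show ?thesis .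
next
  case False
  define q where "q = eps / b"
  have q: "0 < q" "q \<le> 1" "q * b = eps" using False eps unfolding q_def by auto
  have "ennreal q * val h Q + ennreal (1 - q) * val h (distr P borel (\<lambda>x. (x, x))) \<le> ennreal V"
    using q b by (intro mix_le[OF Q0(1) Q]) (auto simp: Q0 ennreal_mult'[symmetric])
  then have *: "ennreal q * val h Q \<le> ennreal V" by (simp add: Q0)
  have "val h Q = ennreal (1 / q) * (ennreal q * val h Q)"
    using q by (simp add: mult.assoc[symmetric] ennreal_mult'[symmetric])
  also have "\<dots> \<le> ennreal (1 / q) * ennreal V" by (rule mult_left_mono[OF *]) simp
  also have "\<dots> = ennreal (V * (b / eps))" using q V(2) False eps
    by (simp add: ennreal_mult'[symmetric] q_def)
  also have "\<dots> \<le> ennreal (V * max 1 (b / eps))" using V(2) by (intro ennreal_leI mult_left_mono) auto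
  finally show ?thesis .
qed

definition fr :: "('a \<times> 'a) measure \<Rightarrow> real" where "fr Q = enn2real (val h Q)"
definition cr :: "('a \<times> 'a) measure \<Rightarrow> real" where "cr Q = enn2real (cost Q)"

lemma fin_vals:
  assumes Q: "Q \<in> cpl P" and c: "cost Q < \<top>"
  shows "cost Q = ennreal (cr Q)" "val h Q = ennreal (fr Q)" "cr Q \<ge> 0" "fr Q \<ge> 0"
    "fr Q \<le> V * max 1 (cr Q / eps)"
proof -
  show c1: "cost Q = ennreal (cr Q)" "cr Q \<ge> 0" using c unfolding cr_def by (auto simp: less_top)
  have b: "val h Q \<le> ennreal (V * max 1 (cr Q / eps))" by (rule finite_bound[OF Q c1])
  then have "val h Q < \<top>" using top_greatest less_le_trans ennreal_less_top by (metis order_le_less_trans)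
  then show v: "val h Q = ennreal (fr Q)" "fr Q \<ge> 0" unfolding fr_def by (auto simp: less_top)
  show "fr Q \<le> V * max 1 (cr Q / eps)"
  proof -
    have "ennreal (fr Q) \<le> ennreal (V * max 1 (cr Q / eps))" using b v by simp
    moreover have "0 \<le> V * max 1 (cr Q / eps)" using V(2) by simp
    ultimately show ?thesis by (simp add: ennreal_le_iff)
  qed
qed

definition S :: "real set" where
  "S = {(fr Q - V) / (cr Q - eps) | Q. Q \<in> cpl P \<and> cost Q < \<top> \<and> cr Q > eps}"

definition lam :: real where "lam = Sup (insert 0 S)"

lemma S_bdd: "s \<in> S \<Longrightarrow> s \<le> V / eps"
proof -
  assume "s \<in> S"
  then obtain Q where Q: "Q \<in> cpl P" "cost Q < \<top>" "cr Q > eps" and s: "s = (fr Q - V) / (cr Q - eps)"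
    unfolding S_def by blast
  have "fr Q \<le> V * (cr Q / eps)" using fin_vals(5)[OF Q(1,2)] Q(3) eps by simp
  then have "fr Q - V \<le> V / eps * (cr Q - eps)" using eps by (simp add: field_simps)
  then show ?thesis unfolding s using Q(3) by (simp add: divide_le_eq)
qed

lemma bdd: "bdd_above (insert 0 S)"
  using S_bdd V(2) eps unfolding bdd_above_def
  by (intro exI[of _ "V / eps"]) auto

lemma lam_nonneg: "lam \<ge> 0"
  unfolding lam_def by (rule cSup_upper[OF _ bdd]) simp

lemma superg:
  assumes Q: "Q \<in> cpl P" and c: "cost Q < \<top>"
  shows "fr Q \<le> V + lam * (cr Q - eps)"
proof (cases "cr Q > eps")
  case True
  then have "(fr Q - V) / (cr Q - eps) \<in> S" unfolding S_def using Q c by blast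
  then have "(fr Q - V) / (cr Q - eps) \<le> lam" unfolding lam_def by (intro cSup_upper bdd) simp
  then show ?thesis using True by (simp add: divide_le_eq algebra_simps)
next
  case False
  note F = fin_vals[OF Q c]
  show ?thesis
  proof (cases "cr Q = eps")
    case True
    then show ?thesis using feas_le[OF Q] F by simp
  next
    case False': False
    with False have lt: "cr Q < eps" by simp
    have fle: "fr Q \<le> V" using feas_le[OF Q] F lt V(2) by simp
    have "lam \<le> (V - fr Q) / (eps - cr Q)" unfolding lam_def
    proof (rule cSup_least)
      fix s assume "s \<in> insert 0 S"
      then show "s \<le> (V - fr Q) / (eps - cr Q)"
      proof
        assume "s = 0" then show ?thesis using fle lt by simp
      next
        assume "s \<in> S"
        then obtain Q2 where Q2: "Q2 \<in> cpl P" "cost Q2 < \<top>" "cr Q2 > eps"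
          and s: "s = (fr Q2 - V) / (cr Q2 - eps)"
          unfolding S_def by blast
        note F2 = fin_vals[OF Q2(1,2)]
        define q where "q = (eps - cr Q) / (cr Q2 - cr Q)"
        have q12: "0 \<le> q" "q \<le> 1"
          using lt Q2(3) unfolding q_def by (auto simp: field_simps)
        have qd: "q * (cr Q2 - cr Q) = eps - cr Q" using lt Q2(3) unfolding q_def by simp
        then have "q * cr Q2 + (1 - q) * cr Q = eps" by (simp add: algebra_simps)
        note q = q12 this
        have "ennreal q * val h Q2 + ennreal (1 - q) * val h Q \<le> ennreal V"
        proof (rule mix_le[OF Q Q2(1) q(1,2)])
          have "ennreal q * cost Q2 + ennreal (1 - q) * cost Q = ennreal (q * cr Q2 + (1 - q) * cr Q)"
            using q(1,2) F F2 by (simp add: ennreal_mult' ennreal_plus)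
          then show "ennreal q * cost Q2 + ennreal (1 - q) * cost Q \<le> ennreal eps" using q by simp
        qed
        moreover have B: "ennreal q * val h Q2 + ennreal (1 - q) * val h Q = ennreal (q * fr Q2 + (1 - q) * fr Q)"
            using q(1,2) F F2 by (simp add: ennreal_mult' ennreal_plus)
        ultimately have "ennreal (q * fr Q2 + (1 - q) * fr Q) \<le> ennreal V" by (simp only: B)
        then have "q * fr Q2 + (1 - q) * fr Q \<le> V" using V(2) by (simp add: ennreal_le_iff)
        then have "(cr Q2 - cr Q) * (q * fr Q2 + (1 - q) * fr Q) \<le> (cr Q2 - cr Q) * V"
          using lt Q2(3) by (intro mult_left_mono) auto
        moreover have "(cr Q2 - cr Q) * (q * fr Q2 + (1 - q) * fr Q) =
            (q * (cr Q2 - cr Q)) * fr Q2 + (cr Q2 - cr Q) * fr Q - (q * (cr Q2 - cr Q)) * fr Q"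
          by (simp add: algebra_simps)
        ultimately have "(eps - cr Q) * fr Q2 + (cr Q2 - cr Q) * fr Q - (eps - cr Q) * fr Q \<le> (cr Q2 - cr Q) * V"
          unfolding qd by simp
        then have "(eps - cr Q) * fr Q2 + (cr Q2 - eps) * fr Q \<le> (cr Q2 - cr Q) * V"
          by (simp add: algebra_simps)
        then have "(eps - cr Q) * (fr Q2 - V) \<le> (cr Q2 - eps) * (V - fr Q)"
          by (simp add: algebra_simps)
        then show ?thesis unfolding s using lt Q2(3) by (simp add: divide_le_eq le_divide_eq mult.commute)
      qed
    qed simp
    then show ?thesis using lt by (simp add: le_divide_eq algebra_simps)
  qed
qed

lemma V_lam: "V - lam * eps \<ge> 0"
  using superg[OF Q0(1)] Q0 unfolding fr_def cr_def by simp

end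


context fr_setup begin

definition en :: "nat \<Rightarrow> 'a" where "en = from_nat_into D"

lemma en_range: "range en = D"
  unfolding en_def by (rule range_from_nat_into[OF D_ne D(1)])

definition mt :: "real \<Rightarrow> real \<Rightarrow> 'a \<Rightarrow> real" where
  "mt l M x = real_of_ereal (min (r_lam l h x) (ereal M))"

lemma mt: assumes "M \<ge> 0" shows "0 \<le> mt l M x" "mt l M x \<le> M" "ereal (mt l M x) \<le> r_lam l h x"
proof -
  have r0: "0 \<le> r_lam l h x" by (rule r_nonneg)
  have fin: "min (r_lam l h x) (ereal M) = ereal (mt l M x)"
    using r0 assms unfolding mt_def by (cases "r_lam l h x") (auto simp: min_def)
  have "0 \<le> min (r_lam l h x) (ereal M)" using r0 assms by auto
  then show "0 \<le> mt l M x" using fin by simp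
  have "min (r_lam l h x) (ereal M) \<le> ereal M" by simp
  then show "mt l M x \<le> M" using fin by simp
  have "min (r_lam l h x) (ereal M) \<le> r_lam l h x" by simp
  then show "ereal (mt l M x) \<le> r_lam l h x" using fin by simp
qed

lemma mt_meas: "l \<ge> 0 \<Longrightarrow> mt l M \<in> borel_measurable borel"
  unfolding mt_def using r_meas by measurable

definition Nsel :: "real \<Rightarrow> real \<Rightarrow> real \<Rightarrow> 'a \<Rightarrow> nat" where
  "Nsel l M d x = (LEAST n. mt l M x - d < gg l x (en n))"

definition Tsel :: "real \<Rightarrow> real \<Rightarrow> real \<Rightarrow> 'a \<Rightarrow> 'a" where
  "Tsel l M d x = en (Nsel l M d x)"

lemma Tsel_gt:
  assumes l: "l \<ge> 0" and M: "M \<ge> 0" and d: "d > 0"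
  shows "mt l M x - d < gg l x (Tsel l M d x)"
proof -
  have "ereal (mt l M x - d) < ereal (mt l M x)" using d by simp
  also have "\<dots> \<le> (SUP y \<in> D. ereal (gg l x y))" using mt(3)[OF M, of l x] r_lam_D[OF l] by simp
  finally obtain y where y: "y \<in> D" "ereal (mt l M x - d) < ereal (gg l x y)"
    by (auto simp: less_SUP_iff)
  then obtain n where "y = en n" using en_range by auto
  then have "\<exists>n. mt l M x - d < gg l x (en n)" using y by auto
  then show ?thesis unfolding Tsel_def Nsel_def by (rule LeastI_ex)
qed

lemma Tsel_meas: assumes l: "l \<ge> 0" shows "Tsel l M d \<in> borel_measurable borel"
proof -
  have g: "(\<lambda>x. gg l x (en n)) \<in> borel_measurable borel" for n
    by (rule borel_measurable_continuous_onI[OF gg_cont1[OF l]])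
  have mm: "mt l M \<in> borel_measurable borel" by (rule mt_meas[OF l])
  have "Nsel l M d \<in> measurable borel (count_space UNIV)"
    unfolding Nsel_def using g mm by measurable
  moreover have "en \<in> measurable (count_space UNIV) borel"
    by (simp add: measurable_count_space_eq1)
  ultimately show ?thesis unfolding Tsel_def
    using measurable_compose by (metis comp_def)
qed

definition TK :: "real \<Rightarrow> real \<Rightarrow> real \<Rightarrow> real \<Rightarrow> 'a \<Rightarrow> 'a" where
  "TK l M d K x = (if dist x (Tsel l M d x) \<le> K then Tsel l M d x else x)"

lemma TK_meas: assumes l: "l \<ge> 0" shows "TK l M d K \<in> borel_measurable borel"
proof -
  have T: "Tsel l M d \<in> borel_measurable borel" by (rule Tsel_meas[OF l])
  have "(\<lambda>x. dist x (Tsel l M d x)) \<in> borel_measurable borel"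
    using T by measurable
  then show ?thesis unfolding TK_def using T by measurable
qed

end


context fr_fin begin

lemma bound_K:
  assumes M: "M \<ge> 0" and d: "d > 0" and K: "K \<ge> 0"
  shows "(\<integral>\<^sup>+ x. ennreal (mt lam M x) * indicator {x. dist x (Tsel lam M d x) \<le> K} x \<partial>P)
     \<le> ennreal (V - lam * eps + d)"
proof -
  note l = lam_nonneg
  define T where "T = TK lam M d K"
  define A where "A = {x. dist x (Tsel lam M d x) \<le> K}"
  define Q where "Q = distr P borel (\<lambda>x. (x, T x))"
  have Tm: "T \<in> borel_measurable borel" unfolding T_def by (rule TK_meas[OF l])
  note pQ = push[OF Tm, folded Q_def]
  have Tsm: "Tsel lam M d \<in> borel_measurable borel" by (rule Tsel_meas[OF l])
  have Am: "A \<in> sets borel" unfolding A_def using Tsm by measurable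
  have mm: "mt lam M \<in> borel_measurable borel" by (rule mt_meas[OF l])
  have cm: "(\<lambda>x. ennreal (dist x (T x))) \<in> borel_measurable borel" using Tm by measurable
  have fm: "(\<lambda>x. ennreal (dist (h x) (h (T x)))) \<in> borel_measurable borel"
  proof -
    have "(\<lambda>x. dist (h (fst x)) (h (snd x))) \<circ> (\<lambda>x. (x, T x)) \<in> borel_measurable borel"
      by (rule measurable_comp[OF meas_pair_borel[OF measurable_ident_sets[OF refl] Tm]
          borel_measurable_continuous_onI[OF h_cont]])
    then show ?thesis by (simp add: o_def)
  qed
  have pw: "ennreal lam * ennreal (dist x (T x)) + ennreal (mt lam M x) * indicator A x
      \<le> ennreal (dist (h x) (h (T x))) + ennreal d" for x
  proof (cases "x \<in> A")
    case True
    then have Tx: "T x = Tsel lam M d x" unfolding T_def TK_def A_def by simp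
    have "mt lam M x - d < gg lam x (T x)" unfolding Tx by (rule Tsel_gt[OF l M d])
    then have le: "lam * dist x (T x) + mt lam M x \<le> dist (h x) (h (T x)) + d" unfolding gg_def by simp
    have "ennreal lam * ennreal (dist x (T x)) + ennreal (mt lam M x) * indicator A x
        = ennreal (lam * dist x (T x) + mt lam M x)"
      using True l mt(1)[OF M] by (simp add: ennreal_mult' ennreal_plus)
    also have "\<dots> \<le> ennreal (dist (h x) (h (T x)) + d)" by (rule ennreal_leI[OF le])
    also have "\<dots> = ennreal (dist (h x) (h (T x))) + ennreal d" using d by (simp add: ennreal_plus)
    finally show ?thesis .
  next
    case False
    then have Tx: "T x = x" unfolding T_def TK_def A_def by simp
    show ?thesis using False Tx by simp
  qed
  define I where "I = (\<integral>\<^sup>+ x. ennreal (mt lam M x) * indicator A x \<partial>P)"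
  have "ennreal lam * cost Q + I = (\<integral>\<^sup>+ x. ennreal lam * ennreal (dist x (T x)) + ennreal (mt lam M x) * indicator A x \<partial>P)"
    unfolding pQ(2) I_def using cm mm Am
    by (subst nn_integral_add) (auto simp: measP nn_integral_cmult)
  also have "\<dots> \<le> (\<integral>\<^sup>+ x. ennreal (dist (h x) (h (T x))) + ennreal d \<partial>P)"
    by (intro nn_integral_mono pw)
  also have "\<dots> = val h Q + ennreal d"
    unfolding pQ(3) using fm by (subst nn_integral_add) (auto simp: measP prob_space.emeasure_space_1[OF prob])
  finally have main: "ennreal lam * cost Q + I \<le> val h Q + ennreal d" .
  have "cost Q \<le> (\<integral>\<^sup>+ x. ennreal K \<partial>P)" unfolding pQ(2)
  proof (rule nn_integral_mono)
    fix x show "ennreal (dist x (T x)) \<le> ennreal K"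
      by (cases "x \<in> A") (auto simp: T_def TK_def A_def K intro: ennreal_leI)
  qed
  also have "\<dots> = ennreal K" by (simp add: prob_space.emeasure_space_1[OF prob])
  finally have cK: "cost Q < \<top>" using ennreal_less_top le_less_trans by blast
  note F = fin_vals[OF pQ(1) cK]
  have sg: "fr Q \<le> V + lam * (cr Q - eps)" by (rule superg[OF pQ(1) cK])
  have "I < \<top>"
  proof -
    have "I \<le> ennreal lam * cost Q + I" by simp
    also have "\<dots> \<le> val h Q + ennreal d" by (rule main)
    also have "\<dots> = ennreal (fr Q + d)" using F d by (simp add: ennreal_plus)
    finally show ?thesis using ennreal_less_top le_less_trans by blast
  qed
  then obtain i where i: "I = ennreal i" "i \<ge> 0" using less_top_ennreal by (cases I) auto
  have "ennreal (lam * cr Q + i) \<le> ennreal (fr Q + d)"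
    using main F i l d by (simp add: ennreal_mult' ennreal_plus)
  moreover have "0 \<le> fr Q + d" using F d by simp
  ultimately have "lam * cr Q + i \<le> fr Q + d" by (simp only: ennreal_le_iff)
  then have "i \<le> V - lam * eps + d" using sg by (simp add: algebra_simps)
  then show ?thesis unfolding I_def[symmetric] A_def[symmetric] i by (rule ennreal_leI)
qed

end


context fr_setup begin
lemma mt_eq: "M \<ge> 0 \<Longrightarrow> ereal (mt l M x) = min (r_lam l h x) (ereal M)"
  using r_nonneg[of l x] unfolding mt_def by (cases "r_lam l h x") (auto simp: min_def)
end

context fr_fin begin

lemma bound_M:
  assumes M: "M \<ge> 0" and d: "d > 0"
  shows "(\<integral>\<^sup>+ x. ennreal (mt lam M x) \<partial>P) \<le> ennreal (V - lam * eps + d)"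
proof -
  note l = lam_nonneg
  define f where "f n x = ennreal (mt lam M x) * indicator {x. dist x (Tsel lam M d x) \<le> real n} x" for n x
  have Tsm: "Tsel lam M d \<in> borel_measurable borel" by (rule Tsel_meas[OF l])
  have mm: "mt lam M \<in> borel_measurable borel" by (rule mt_meas[OF l])
  have fm: "f n \<in> borel_measurable P" for n unfolding f_def measP using Tsm mm by measurable
  have inc: "incseq f"
    unfolding incseq_def f_def
    by (auto intro!: le_funI mult_left_mono simp: indicator_def)
  have sup: "(SUP n. f n x) = ennreal (mt lam M x)" for x
  proof (rule antisym)
    show "(SUP n. f n x) \<le> ennreal (mt lam M x)"
      by (rule SUP_least) (auto simp: f_def indicator_def)
    have "dist x (Tsel lam M d x) \<le> real (nat \<lceil>dist x (Tsel lam M d x)\<rceil>)" by linarith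
    then have "f (nat \<lceil>dist x (Tsel lam M d x)\<rceil>) x = ennreal (mt lam M x)" by (simp add: f_def)
    then show "ennreal (mt lam M x) \<le> (SUP n. f n x)" by (metis SUP_upper UNIV_I)
  qed
  have "(\<integral>\<^sup>+ x. ennreal (mt lam M x) \<partial>P) = (\<integral>\<^sup>+ x. (SUP n. f n x) \<partial>P)" by (simp add: sup)
  also have "\<dots> = (SUP n. \<integral>\<^sup>+ x. f n x \<partial>P)" by (rule nn_integral_monotone_convergence_SUP[OF inc fm])
  also have "\<dots> \<le> ennreal (V - lam * eps + d)"
    by (rule SUP_least) (unfold f_def, rule bound_K[OF M d], simp)
  finally show ?thesis .
qed

lemma bound_r:
  assumes d: "d > 0"
  shows "(\<integral>\<^sup>+ x. e2ennreal (r_lam lam h x) \<partial>P) \<le> ennreal (V - lam * eps + d)"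
proof -
  note l = lam_nonneg
  define f where "f n x = ennreal (mt lam (real n) x)" for n x
  have fm: "f n \<in> borel_measurable P" for n unfolding f_def measP using mt_meas[OF l] by measurable
  have inc: "incseq f"
  proof (unfold incseq_def f_def, intro allI impI le_funI ennreal_leI)
    fix m n :: nat and x assume "m \<le> n"
    then have "ereal (mt lam (real m) x) \<le> ereal (mt lam (real n) x)"
      by (simp add: mt_eq min.coboundedI1 min_le_iff_disj)
    then show "mt lam (real m) x \<le> mt lam (real n) x" by simp
  qed
  have sup: "(SUP n. f n x) = e2ennreal (r_lam lam h x)" for x
  proof (rule antisym)
    show "(SUP n. f n x) \<le> e2ennreal (r_lam lam h x)"
    proof (rule SUP_least)
      fix n
      have "ereal (mt lam (real n) x) \<le> r_lam lam h x" by (rule mt(3)) simp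
      then have "e2ennreal (ereal (mt lam (real n) x)) \<le> e2ennreal (r_lam lam h x)" by (rule e2ennreal_mono)
      then show "f n x \<le> e2ennreal (r_lam lam h x)" by (simp add: f_def e2ennreal_ereal)
    qed
    show "e2ennreal (r_lam lam h x) \<le> (SUP n. f n x)"
    proof (cases "r_lam lam h x")
      case (real t)
      have "t \<le> real (nat \<lceil>t\<rceil>)" by linarith
      then have "ereal (mt lam (real (nat \<lceil>t\<rceil>)) x) = ereal t" by (simp add: mt_eq real min_def)
      then have "f (nat \<lceil>t\<rceil>) x = e2ennreal (r_lam lam h x)" by (simp add: f_def real e2ennreal_ereal)
      then show ?thesis by (metis SUP_upper UNIV_I)
    next
      case PInf
      have "f n x = of_nat n" for n
      proof -
        have "ereal (mt lam (real n) x) = ereal (real n)" by (simp add: mt_eq PInf)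
        then show ?thesis by (simp add: f_def ennreal_of_nat_eq_real_of_nat)
      qed
      then have s: "(SUP n. f n x) = \<top>" using ennreal_SUP_of_nat_eq_top by simp
      show ?thesis unfolding s by simp
    next
      case MInf then show ?thesis using r_nonneg[of lam x] by simp
    qed
  qed
  have "(\<integral>\<^sup>+ x. e2ennreal (r_lam lam h x) \<partial>P) = (\<integral>\<^sup>+ x. (SUP n. f n x) \<partial>P)" by (simp add: sup)
  also have "\<dots> = (SUP n. \<integral>\<^sup>+ x. f n x \<partial>P)" by (rule nn_integral_monotone_convergence_SUP[OF inc fm])
  also have "\<dots> \<le> ennreal (V - lam * eps + d)"
    by (rule SUP_least) (unfold f_def, rule bound_M[OF _ d], simp)
  finally show ?thesis .
qed

lemma strong:
  "(INF l \<in> {0..}. ennreal (l * eps) + (\<integral>\<^sup>+ x. e2ennreal (r_lam l h x) \<partial>P)) \<le> fair_reg P eps h"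
proof -
  have "(\<integral>\<^sup>+ x. e2ennreal (r_lam lam h x) \<partial>P) \<le> ennreal (V - lam * eps)"
  proof (rule ennreal_le_epsilon)
    fix d :: real assume "0 < d"
    then show "(\<integral>\<^sup>+ x. e2ennreal (r_lam lam h x) \<partial>P) \<le> ennreal (V - lam * eps) + ennreal d"
      using bound_r[of d] V_lam by (simp add: ennreal_plus)
  qed
  then have "ennreal (lam * eps) + (\<integral>\<^sup>+ x. e2ennreal (r_lam lam h x) \<partial>P)
      \<le> ennreal (lam * eps) + ennreal (V - lam * eps)" by (rule add_left_mono)
  also have "\<dots> = ennreal V" using V_lam lam_nonneg eps by (simp flip: ennreal_plus)
  also have "\<dots> = fair_reg P eps h" using V(1) by simp
  finally have "ennreal (lam * eps) + (\<integral>\<^sup>+ x. e2ennreal (r_lam lam h x) \<partial>P) \<le> fair_reg P eps h" .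
  moreover have "(INF l \<in> {0..}. ennreal (l * eps) + (\<integral>\<^sup>+ x. e2ennreal (r_lam l h x) \<partial>P))
      \<le> ennreal (lam * eps) + (\<integral>\<^sup>+ x. e2ennreal (r_lam lam h x) \<partial>P)"
    using lam_nonneg by (intro INF_lower) simp
  ultimately show ?thesis by (rule order_trans[rotated])
qed

end

theorem theorem2p3:
  fixes P :: "'a::polish_space measure" and h :: "'a \<Rightarrow> 'b::polish_space" and eps :: real
  assumes "prob_space P" and "sets P = sets (borel :: 'a measure)"
    and "eps > 0"
    and "\<forall>lam \<ge> 0. continuous_on UNIV (\<lambda>(x, x'). dist (h x) (h x') - lam * dist x x')"
  shows "fair_reg P eps h =
    (INF lam \<in> {0..}. ennreal (lam * eps) + (\<integral>\<^sup>+ x. e2ennreal (r_lam lam h x) \<partial>P))"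
proof -
  interpret fr_setup P h eps by (rule fr_setup.intro[OF assms])
  show ?thesis
  proof (rule antisym[OF weak_dual])
    show "(INF lam \<in> {0..}. ennreal (lam * eps) + (\<integral>\<^sup>+ x. e2ennreal (r_lam lam h x) \<partial>P)) \<le> fair_reg P eps h"
    proof (cases "fair_reg P eps h < \<top>")
      case True
      interpret fr_fin P h eps by (rule fr_fin.intro[OF fr_setup.intro[OF assms] fr_fin_axioms.intro[OF True]])
      show ?thesis by (rule strong)
    qed (simp add: less_top[symmetric])
  qed
qed


end
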